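(* In the peer prediction mechanism, for every $n\ge 2$ and every strictly proper scoring rule $PS$, the truthful profile $\Sigma^*$ is an ex-ante Bayesian $k_E$-strong equilibrium. Here $$k_E^h=\begin{cases}\left\lfloor \dfrac{(n-1)\,\mathbb E_{s\sim P_\ell}[PS(s,P_\ell)-PS(s,P_h)]}{PS(h,P_h)-PS(\ell,P_h)}\right\rfloor+1 & \text{if } PS(h,P_h)>PS(\ell,P_h),\\ n&\text{otherwise,}\end{cases}$$ $$k_E^\ell=\begin{cases}\left\lfloor \dfrac{(n-1)\,\mathbb E_{s\sim P_h}[PS(s,P_h)-PS(s,P_\ell)]}{PS(\ell,P_\ell)-PS(h,P_\ell)}\right\rfloor+1 & \text{if } PS(\ell,P_\ell)>PS(h,P_\ell),\\ n&\text{otherwise,}\end{cases}$$ and $k_E=\min(k_E^h,k_E^\ell,n)$. Moreover, for every integer $k$ with $k_E<k\le n$, $\Sigma^*$ is not an ex-ante Bayesian $k$-strong equilibrium.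
   Context: Peer prediction setting. There are $n\ge 2$ agents $[n]$. Each agent $i$ privately observes a signal $\Psi_i\in\{\ell,h\}$ and reports $r_i\in\{\ell,h\}$. Signals are drawn from a common prior $Q$ on $\{\ell,h\}^n$ that is symmetric, i.e., invariant under permutations of the agents. $P(s)$ denotes the marginal probability that an agent has signal $s$. $P(s\mid s')$ denotes the probability that another agent $j\ne i$ has signal $s$ given that agent $i$ has signal $s'$. $P_{s'}=P(\cdot\mid s')$ is the corresponding distribution on $\{\ell,h\}$. Standing assumptions: $P(\ell),P(h)>0$, $P(h\mid h)>P(h\mid\ell)$, $P(h\mid\ell)>0$ and $P(\ell\mid h)>0$. A scoring rule $PS:\{\ell,h\}\times\Delta_{\{\ell,h\}}\to\mathbb R$ is strictly proper if $\mathbb E_{s\sim p}[PS(s,p)]>\mathbb E_{s\sim p}[PS(s,q)]$ for all distributions $p\ne q$. The mechanism gives agent $i$ the utility $v_i=\frac1{n-1}\sum_{j\ne i}PS(r_j,P_{r_i})$. A strategy is a pair $\sigma=(\beta_\ell,\beta_h)\in[0,1]^2$, where $\beta_\ell$ and $\beta_h$ are the probabilities of reporting $h$ given signal $\ell$ and signal $h$, respectively. Given signals, reports are drawn independently. The truthful strategy is $(0,1)$, and $\Sigma^*$ is the profile in which all agents play it. The ex-ante utility $u_i(\Sigma)$ is the expectation of $v_i$. The interim utility $u_i(\Sigma\mid s)$ is its expectation conditioned on $\Psi_i=s$. A profile $\Sigma$ is an ex-ante Bayesian $k$-strong equilibrium if there is no set $D\subseteq[n]$ with $|D|\le k$ and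 no profile $\Sigma'$ such that: (1) agents outside $D$ keep their strategies from $\Sigma$; (2) $u_i(\Sigma')\ge u_i(\Sigma)$ for all $i\in D$; and (3) $u_i(\Sigma')>u_i(\Sigma)$ for some $i\in D$. *)

theory Defs
  imports "HOL-Probability.Probability" "HOL-Combinatorics.Permutations"
begin

(* Signals and reports: True = h, False = l.
   Agents are 0..n-1; a signal (or report) profile is a bool list of length n. *)

definition profiles :: "nat \<Rightarrow> bool list set" where
  "profiles n = {xs. length xs = n}"

definition is_prior :: "nat \<Rightarrow> (bool list \<Rightarrow> real) \<Rightarrow> bool" where
  "is_prior n Q \<longleftrightarrow> (\<forall>xs\<in>profiles n. Q xs \<ge> 0) \<and> (\<Sum>xs\<in>profiles n. Q xs) = 1"

definition symmetric_prior :: "nat \<Rightarrow> (bool list \<Rightarrow> real) \<Rightarrow> bool" where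
  "symmetric_prior n Q \<longleftrightarrow>
     (\<forall>\<pi> xs. \<pi> permutes {..<n} \<longrightarrow> length xs = n \<longrightarrow> Q (permute_list \<pi> xs) = Q xs)"

(* marginal probability P(s) that an agent (agent 0; by symmetry any agent) has signal s *)
definition marg :: "nat \<Rightarrow> (bool list \<Rightarrow> real) \<Rightarrow> bool \<Rightarrow> real" where
  "marg n Q s = (\<Sum>xs\<in>profiles n. if xs ! 0 = s then Q xs else 0)"

(* P(s | s'): probability that another agent (agent 1) has s given agent 0 has s' *)
definition cond :: "nat \<Rightarrow> (bool list \<Rightarrow> real) \<Rightarrow> bool \<Rightarrow> bool \<Rightarrow> real" where
  "cond n Q s s' = (\<Sum>xs\<in>profiles n. if xs ! 0 = s' \<and> xs ! 1 = s then Q xs else 0) / marg n Q s'"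

definition Pc :: "nat \<Rightarrow> (bool list \<Rightarrow> real) \<Rightarrow> bool \<Rightarrow> bool pmf" where
  "Pc n Q s' = bernoulli_pmf (cond n Q True s')"

definition Ex :: "bool pmf \<Rightarrow> (bool \<Rightarrow> real) \<Rightarrow> real" where
  "Ex p f = (\<Sum>s\<in>UNIV. pmf p s * f s)"

definition strictly_proper :: "(bool \<Rightarrow> bool pmf \<Rightarrow> real) \<Rightarrow> bool" where
  "strictly_proper PS \<longleftrightarrow> (\<forall>p q. p \<noteq> q \<longrightarrow> Ex p (\<lambda>s. PS s p) > Ex p (\<lambda>s. PS s q))"

(* a strategy is (beta_l, beta_h): probabilities of reporting h given signal l resp. h *)
definition is_strategy :: "real \<times> real \<Rightarrow> bool" where
  "is_strategy \<sigma> \<longleftrightarrow> 0 \<le> fst \<sigma> \<and> fst \<sigma> \<le> 1 \<and> 0 \<le> snd \<sigma> \<and> snd \<sigma> \<le> 1"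

definition is_profile :: "nat \<Rightarrow> (nat \<Rightarrow> real \<times> real) \<Rightarrow> bool" where
  "is_profile n \<Sigma> \<longleftrightarrow> (\<forall>i<n. is_strategy (\<Sigma> i))"

definition rprob :: "real \<times> real \<Rightarrow> bool \<Rightarrow> bool \<Rightarrow> real" where
  "rprob \<sigma> s r = (let \<beta> = (if s then snd \<sigma> else fst \<sigma>) in if r then \<beta> else 1 - \<beta>)"

definition truthful :: "real \<times> real" where
  "truthful = (0, 1)"

definition payment :: "nat \<Rightarrow> (bool list \<Rightarrow> real) \<Rightarrow> (bool \<Rightarrow> bool pmf \<Rightarrow> real) \<Rightarrow> nat \<Rightarrow> bool list \<Rightarrow> real" where
  "payment n Q PS i rs = (1 / (real n - 1)) * (\<Sum>j\<in>{..<n} - {i}. PS (rs ! j) (Pc n Q (rs ! i)))"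

definition util :: "nat \<Rightarrow> (bool list \<Rightarrow> real) \<Rightarrow> (bool \<Rightarrow> bool pmf \<Rightarrow> real) \<Rightarrow> (nat \<Rightarrow> real \<times> real) \<Rightarrow> nat \<Rightarrow> real" where
  "util n Q PS \<Sigma> i =
     (\<Sum>xs\<in>profiles n. \<Sum>rs\<in>profiles n.
        Q xs * (\<Prod>j<n. rprob (\<Sigma> j) (xs ! j) (rs ! j)) * payment n Q PS i rs)"

definition ex_ante_k_strong_eq ::
  "nat \<Rightarrow> (bool list \<Rightarrow> real) \<Rightarrow> (bool \<Rightarrow> bool pmf \<Rightarrow> real) \<Rightarrow> int \<Rightarrow> (nat \<Rightarrow> real \<times> real) \<Rightarrow> bool" where
  "ex_ante_k_strong_eq n Q PS k \<Sigma> \<longleftrightarrow>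
     \<not> (\<exists>D \<Sigma>'. D \<subseteq> {..<n} \<and> int (card D) \<le> k \<and> is_profile n \<Sigma>' \<and>
            (\<forall>j\<in>{..<n} - D. \<Sigma>' j = \<Sigma> j) \<and>
            (\<forall>i\<in>D. util n Q PS \<Sigma>' i \<ge> util n Q PS \<Sigma> i) \<and>
            (\<exists>i\<in>D. util n Q PS \<Sigma>' i > util n Q PS \<Sigma> i))"

definition kE_h :: "nat \<Rightarrow> (bool list \<Rightarrow> real) \<Rightarrow> (bool \<Rightarrow> bool pmf \<Rightarrow> real) \<Rightarrow> int" where
  "kE_h n Q PS =
     (let Pl = Pc n Q False; Ph = Pc n Q True in
      if PS True Ph > PS False Ph
      then \<lfloor>(real n - 1) * Ex Pl (\<lambda>s. PS s Pl - PS s Ph) / (PS True Ph - PS False Ph)\<rfloor> + 1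
      else int n)"

definition kE_l :: "nat \<Rightarrow> (bool list \<Rightarrow> real) \<Rightarrow> (bool \<Rightarrow> bool pmf \<Rightarrow> real) \<Rightarrow> int" where
  "kE_l n Q PS =
     (let Pl = Pc n Q False; Ph = Pc n Q True in
      if PS False Pl > PS True Pl
      then \<lfloor>(real n - 1) * Ex Ph (\<lambda>s. PS s Ph - PS s Pl) / (PS False Pl - PS True Pl)\<rfloor> + 1
      else int n)"

definition kE :: "nat \<Rightarrow> (bool list \<Rightarrow> real) \<Rightarrow> (bool \<Rightarrow> bool pmf \<Rightarrow> real) \<Rightarrow> int" where
  "kE n Q PS = min (min (kE_h n Q PS) (kE_l n Q PS)) (int n)"

end

theory Submission
  imports Defs
begin


lemma finite_profiles[simp]: "finite (profiles n)"
proof -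
  have "profiles n = {xs. set xs \<subseteq> (UNIV::bool set) \<and> length xs = n}" by (auto simp: profiles_def)
  then show ?thesis using finite_lists_length_eq[of "UNIV::bool set" n] by simp
qed

lemma profiles_Suc: "profiles (Suc n) = (\<lambda>(x,xs). x # xs) ` (UNIV \<times> profiles n)"
  unfolding profiles_def
  by (auto simp: image_def length_Suc_conv)

lemma sum_prod_lists:
  "(\<Sum>rs\<in>profiles n. \<Prod>k<n. w k (rs!k)) = (\<Prod>k<n. \<Sum>x\<in>(UNIV::bool set). (w k x :: real))"
proof (induction n arbitrary: w)
  case 0
  then show ?case by (simp add: profiles_def)
next
  case (Suc n)
  have inj: "inj_on (\<lambda>(x,xs). x # xs) (UNIV \<times> profiles n)" by (auto simp: inj_on_def)
  have "(\<Sum>rs\<in>profiles (Suc n). \<Prod>k<Suc n. w k (rs!k))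
      = (\<Sum>p\<in>UNIV \<times> profiles n. \<Prod>k<Suc n. w k ((fst p # snd p)!k))"
    unfolding profiles_Suc by (subst sum.reindex[OF inj]) (auto intro!: sum.cong simp: case_prod_beta)
  also have "\<dots> = (\<Sum>x\<in>UNIV. \<Sum>xs\<in>profiles n. w 0 x * (\<Prod>k<n. w (Suc k) (xs!k)))"
    by (simp add: sum.cartesian_product prod.lessThan_Suc_shift case_prod_beta del: prod.lessThan_Suc)
  also have "\<dots> = (\<Sum>x\<in>UNIV. w 0 x * (\<Prod>k<n. \<Sum>y\<in>UNIV. w (Suc k) y))"
    by (simp add: sum_distrib_left[symmetric] Suc.IH[of "\<lambda>k. w (Suc k)"])
  also have "\<dots> = (\<Prod>k<Suc n. \<Sum>x\<in>(UNIV::bool set). w k x)"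
    by (simp add: prod.lessThan_Suc_shift sum_distrib_right del: prod.lessThan_Suc)
  finally show ?case .
qed



lemma marg2:
  assumes "i<n" "j<n" "i\<noteq>j" "\<And>k. k<n \<Longrightarrow> w k True + w k False = (1::real)"
  shows "(\<Sum>rs\<in>profiles n. (\<Prod>k<n. w k (rs!k)) * g (rs!i) (rs!j))
       = (\<Sum>r\<in>UNIV. \<Sum>r'\<in>UNIV. w i r * w j r' * g r r')"
proof -
  define w' where "w' r r' k x = w k x * (if k = i then (if x = r then 1 else 0) else 1)
       * (if k = j then (if x = r' then 1 else 0) else 1)" for r r' k x
  have split: "g (rs!i) (rs!j) = (\<Sum>r\<in>UNIV. \<Sum>r'\<in>UNIV. (if rs!i = r \<and> rs!j = r' then g r r' else 0))" for rs
    by (simp add: UNIV_bool)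
  have prodw: "(\<Prod>k<n. w k (rs!k)) * (if rs!i = r \<and> rs!j = r' then 1 else 0) = (\<Prod>k<n. w' r r' k (rs!k))" for rs r r'
  proof -
    have "(\<Prod>k<n. w' r r' k (rs!k)) = (\<Prod>k<n. w k (rs!k)) * (\<Prod>k<n. (if k = i then (if rs!k = r then 1 else 0) else 1))
       * (\<Prod>k<n. (if k = j then (if rs!k = r' then 1 else 0) else 1))"
      unfolding w'_def by (simp add: prod.distrib)
    also have "\<dots> = (\<Prod>k<n. w k (rs!k)) * (if rs!i = r then 1 else 0) * (if rs!j = r' then 1 else 0)"
      using assms(1,2) by (simp add: prod.delta)
    finally show ?thesis by simp
  qed
  have sw: "(\<Sum>x\<in>UNIV. w' r r' k x) = (if k = i then w i r else if k = j then w j r' else 1)" if "k<n" for r r' k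
    using assms(3) assms(4)[OF that] unfolding w'_def by (auto simp: UNIV_bool)
  have "(\<Sum>rs\<in>profiles n. (\<Prod>k<n. w k (rs!k)) * g (rs!i) (rs!j))
      = (\<Sum>rs\<in>profiles n. \<Sum>r\<in>UNIV. \<Sum>r'\<in>UNIV. g r r' * ((\<Prod>k<n. w k (rs!k)) * (if rs!i = r \<and> rs!j = r' then 1 else 0)))"
    by (subst split) (auto simp: sum_distrib_left intro!: sum.cong)
  also have "\<dots> = (\<Sum>r\<in>UNIV. \<Sum>r'\<in>UNIV. g r r' * (\<Sum>rs\<in>profiles n. \<Prod>k<n. w' r r' k (rs!k)))"
    by (simp add: prodw sum_distrib_left sum.swap[of _ "profiles n"])
  also have "\<dots> = (\<Sum>r\<in>UNIV. \<Sum>r'\<in>UNIV. g r r' * (\<Prod>k<n. (if k = i then w i r else if k = j then w j r' else 1)))"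
    proof -
    have "(\<Sum>rs\<in>profiles n. \<Prod>k<n. w' r r' k (rs!k)) = (\<Prod>k<n. (if k = i then w i r else if k = j then w j r' else 1))" for r r'
      unfolding sum_prod_lists by (rule prod.cong) (auto simp: sw)
    then show ?thesis by simp
  qed
  also have "\<dots> = (\<Sum>r\<in>UNIV. \<Sum>r'\<in>UNIV. w i r * w j r' * g r r')"
  proof -
    have "(\<Prod>k<n. (if k = i then w i r else if k = j then w j r' else 1)) = w i r * w j r'" for r r'
    proof -
      have "(\<Prod>k<n. (if k = i then w i r else if k = j then w j r' else 1))
          = (\<Prod>k<n. (if k = i then w i r else 1) * (if k = j then w j r' else 1))"
        using assms(3) by (intro prod.cong) auto
      also have "\<dots> = w i r * w j r'" using assms(1,2) by (simp add: prod.distrib prod.delta)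
      finally show ?thesis .
    qed
    then show ?thesis by (simp add: mult_ac)
  qed
  finally show ?thesis .
qed



lemma permute_bij:
  assumes "p permutes {..<n}"
  shows "bij_betw (permute_list p) (profiles n) (profiles n)"
proof (rule bij_betw_byWitness[where f'="permute_list (inv p)"])
  have ip: "inv p permutes {..<n}" using assms by (rule permutes_inv)
  show "\<forall>a\<in>profiles n. permute_list (inv p) (permute_list p a) = a"
  proof
    fix a assume "a \<in> profiles n"
    then have l: "length a = n" by (simp add: profiles_def)
    have "permute_list (inv p) (permute_list p a) = permute_list (p \<circ> inv p) a"
      using permute_list_compose[of "inv p" a p] ip l by simp
    also have "\<dots> = a" using permutes_inv_o(1)[OF assms] by simp
    finally show "permute_list (inv p) (permute_list p a) = a" .
  qed
  show "\<forall>a\<in>profiles n. permute_list p (permute_list (inv p) a) = a"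
  proof
    fix a assume "a \<in> profiles n"
    then have l: "length a = n" by (simp add: profiles_def)
    have "permute_list p (permute_list (inv p) a) = permute_list (inv p \<circ> p) a"
      using permute_list_compose[of p a "inv p"] assms l by simp
    also have "\<dots> = a" using permutes_inv_o(2)[OF assms] by simp
    finally show "permute_list p (permute_list (inv p) a) = a" .
  qed
qed (auto simp: profiles_def)

lemma sym_pair:
  assumes sym: "symmetric_prior n Q" and "i<n" "j<n" "i\<noteq>j" "2 \<le> n"
  shows "(\<Sum>xs\<in>profiles n. Q xs * h (xs!i) (xs!j)) = (\<Sum>xs\<in>profiles n. Q xs * h (xs!0) (xs!1))"
proof -
  define t1 where "t1 = Transposition.transpose i (0::nat)"
  define p where "p = Transposition.transpose 1 (t1 j) \<circ> t1"
  have t1j: "t1 j \<noteq> 0" "t1 j < n" using assms unfolding t1_def by (auto simp: Transposition.transpose_def)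
  have pi: "p i = 0" using t1j unfolding p_def t1_def by (auto simp: Transposition.transpose_def)
  have pj: "p j = 1" unfolding p_def by (simp add: Transposition.transpose_def)
  have pp: "p permutes {..<n}" unfolding p_def t1_def
    using assms t1j unfolding t1_def
    by (intro permutes_compose permutes_swap_id) auto
  have "(\<Sum>xs\<in>profiles n. Q xs * h (xs!i) (xs!j))
      = (\<Sum>ys\<in>profiles n. Q (permute_list p ys) * h (permute_list p ys!i) (permute_list p ys!j))"
    by (rule sum.reindex_bij_betw[OF permute_bij[OF pp], symmetric])
  also have "\<dots> = (\<Sum>ys\<in>profiles n. Q ys * h (ys!0) (ys!1))"
  proof (rule sum.cong[OF refl])
    fix ys assume "ys \<in> profiles n"
    then have l: "length ys = n" by (simp add: profiles_def)
    have "Q (permute_list p ys) = Q ys" using sym pp l unfolding symmetric_prior_def by blast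
    moreover have "permute_list p ys!i = ys!0" "permute_list p ys!j = ys!1"
      using permute_list_nth[of p ys] pp l assms pi pj by auto
    ultimately show "Q (permute_list p ys) * h (permute_list p ys!i) (permute_list p ys!j) = Q ys * h (ys!0) (ys!1)"
      by simp
  qed
  finally show ?thesis .
qed



definition pi2 :: "nat \<Rightarrow> (bool list \<Rightarrow> real) \<Rightarrow> bool \<Rightarrow> bool \<Rightarrow> real" where
  "pi2 n Q s t = (\<Sum>xs\<in>profiles n. if xs!0 = s \<and> xs!1 = t then Q xs else 0)"

definition pv where
  "pv n Q PS \<sigma> \<tau> = (\<Sum>s\<in>UNIV. \<Sum>t\<in>UNIV. pi2 n Q s t *
      (\<Sum>r\<in>UNIV. \<Sum>r'\<in>UNIV. rprob \<sigma> s r * rprob \<tau> t r' * PS r' (Pc n Q r)))"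

lemma rprob_sum: "rprob \<sigma> s True + rprob \<sigma> s False = 1"
  by (simp add: rprob_def Let_def)

lemma pair_sum:
  assumes sym: "symmetric_prior n Q" and "i<n" "j<n" "i\<noteq>j" "2 \<le> n"
  shows "(\<Sum>xs\<in>profiles n. Q xs * (\<Sum>rs\<in>profiles n. (\<Prod>k<n. rprob (\<Sigma> k) (xs!k) (rs!k)) * PS (rs!j) (Pc n Q (rs!i))))
       = pv n Q PS (\<Sigma> i) (\<Sigma> j)"
proof -
  define H where "H s t = (\<Sum>r\<in>UNIV. \<Sum>r'\<in>UNIV. rprob (\<Sigma> i) s r * rprob (\<Sigma> j) t r' * PS r' (Pc n Q r))" for s t
  have "(\<Sum>xs\<in>profiles n. Q xs * (\<Sum>rs\<in>profiles n. (\<Prod>k<n. rprob (\<Sigma> k) (xs!k) (rs!k)) * PS (rs!j) (Pc n Q (rs!i))))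
      = (\<Sum>xs\<in>profiles n. Q xs * H (xs!i) (xs!j))"
  proof (rule sum.cong[OF refl])
    fix xs
    show "Q xs * (\<Sum>rs\<in>profiles n. (\<Prod>k<n. rprob (\<Sigma> k) (xs!k) (rs!k)) * PS (rs!j) (Pc n Q (rs!i))) = Q xs * H (xs!i) (xs!j)"
      using marg2[of i n j "\<lambda>k x. rprob (\<Sigma> k) (xs!k) x" "\<lambda>a b. PS b (Pc n Q a)"] assms(2-4) rprob_sum
      unfolding H_def by simp
  qed
  also have "\<dots> = (\<Sum>xs\<in>profiles n. Q xs * H (xs!0) (xs!1))"
    by (rule sym_pair[OF assms])
  also have "\<dots> = (\<Sum>xs\<in>profiles n. \<Sum>s\<in>UNIV. \<Sum>t\<in>UNIV. (if xs!0 = s \<and> xs!1 = t then Q xs else 0) * H s t)"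
    by (rule sum.cong[OF refl]) (simp add: UNIV_bool)
  also have "\<dots> = (\<Sum>s\<in>UNIV. \<Sum>t\<in>UNIV. pi2 n Q s t * H s t)"
    unfolding pi2_def by (simp add: sum.swap[of _ "profiles n"] sum_distrib_right)
  also have "\<dots> = pv n Q PS (\<Sigma> i) (\<Sigma> j)" unfolding pv_def H_def ..
  finally show ?thesis .
qed

lemma util_eq:
  assumes sym: "symmetric_prior n Q" and "i<n" "2 \<le> n"
  shows "util n Q PS \<Sigma> i = (1 / (real n - 1)) * (\<Sum>j\<in>{..<n}-{i}. pv n Q PS (\<Sigma> i) (\<Sigma> j))"
proof -
  have "util n Q PS \<Sigma> i = (1 / (real n - 1)) * (\<Sum>j\<in>{..<n}-{i}.
     (\<Sum>xs\<in>profiles n. Q xs * (\<Sum>rs\<in>profiles n. (\<Prod>k<n. rprob (\<Sigma> k) (xs!k) (rs!k)) * PS (rs!j) (Pc n Q (rs!i)))))"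
    unfolding util_def payment_def
    by (simp add: sum_distrib_left sum_distrib_right sum.swap[of _ "{..<n}-{i}"] mult_ac)
  also have "\<dots> = (1 / (real n - 1)) * (\<Sum>j\<in>{..<n}-{i}. pv n Q PS (\<Sigma> i) (\<Sigma> j))"
    using pair_sum[OF sym] assms by (intro arg_cong[where f="\<lambda>x. _ * x"] sum.cong) auto
  finally show ?thesis .
qed



lemma pv_gain:
  assumes "pi2 n Q False False = p00" "pi2 n Q False True = p01" "pi2 n Q True False = p01" "pi2 n Q True True = p11"
    "PS True (Pc n Q True) = A" "PS False (Pc n Q True) = B" "PS True (Pc n Q False) = C" "PS False (Pc n Q False) = D"
  shows "pv n Q PS \<sigma> \<tau> - pv n Q PS truthful truthful =
     - (fst \<sigma> * (p01*(C-A)+p00*(D-B)) + (1 - snd \<sigma>)*(p11*(A-C)+p01*(B-D)))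
     + ((p00+p01)*(A-B)*fst \<tau> + (p01+p11)*(D-C)*(1-snd \<tau>))
     - ((A-B)+(D-C)) * (fst \<tau>*(p00*(1-fst \<sigma>)+p01*(1-snd \<sigma>)) + (1-snd \<tau>)*(p01*fst \<sigma>+p11 * snd \<sigma>))"
  unfolding pv_def truthful_def by (simp add: UNIV_bool rprob_def assms) algebra



lemma Ex_bern: "0 \<le> q \<Longrightarrow> q \<le> 1 \<Longrightarrow> Ex (bernoulli_pmf q) f = q * f True + (1 - q) * f False"
  by (simp add: Ex_def UNIV_bool)

lemma pi2_nonneg: "is_prior n Q \<Longrightarrow> 0 \<le> pi2 n Q s t"
  unfolding pi2_def is_prior_def by (auto intro!: sum_nonneg)

lemma marg_pi2: "marg n Q s = pi2 n Q s False + pi2 n Q s True"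
  unfolding marg_def pi2_def by (subst sum.distrib[symmetric]) (auto intro!: sum.cong)

lemma cond_pi2: "cond n Q s s' = pi2 n Q s' s / marg n Q s'"
  unfolding cond_def pi2_def by (simp add: conj_commute)

lemma pi2_sym:
  assumes "symmetric_prior n Q" "2 \<le> n"
  shows "pi2 n Q True False = pi2 n Q False True"
proof -
  have "pi2 n Q True False = (\<Sum>xs\<in>profiles n. Q xs * (\<lambda>a b. if b = True \<and> a = False then 1 else 0) (xs!1) (xs!0))"
    unfolding pi2_def by (auto intro!: sum.cong)
  also have "\<dots> = (\<Sum>xs\<in>profiles n. Q xs * (\<lambda>a b. if b = True \<and> a = False then 1 else 0) (xs!0) (xs!1))"
    using assms by (intro sym_pair) auto
  also have "\<dots> = pi2 n Q False True"
    unfolding pi2_def by (auto intro!: sum.cong)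
  finally show ?thesis .
qed



theorem theorem1:
  fixes n :: nat and Q :: "bool list \<Rightarrow> real" and PS :: "bool \<Rightarrow> bool pmf \<Rightarrow> real"
  assumes "n \<ge> 2"
    and "is_prior n Q" and "symmetric_prior n Q"
    and "marg n Q False > 0" and "marg n Q True > 0"
    and "cond n Q True True > cond n Q True False"
    and "cond n Q True False > 0" and "cond n Q False True > 0"
    and "strictly_proper PS"
  shows "ex_ante_k_strong_eq n Q PS (kE n Q PS) (\<lambda>_. truthful)
         \<and> (\<forall>k::int. kE n Q PS < k \<and> k \<le> int n \<longrightarrow> \<not> ex_ante_k_strong_eq n Q PS k (\<lambda>_. truthful))"
proof -
  note n2 = assms(1) and sym = assms(3)
  define p00 where "p00 = pi2 n Q False False"
  define p01 where "p01 = pi2 n Q False True"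
  define p11 where "p11 = pi2 n Q True True"
  have p10: "pi2 n Q True False = p01" using pi2_sym[OF sym n2] p01_def by simp
  have p00n: "p00 \<ge> 0" and p01n: "p01 \<ge> 0" and p11n: "p11 \<ge> 0"
    using pi2_nonneg[OF assms(2)] p00_def p01_def p11_def by auto
  define c0 where "c0 = p00 + p01"
  define c1 where "c1 = p01 + p11"
  have c0: "marg n Q False = c0" unfolding c0_def p00_def p01_def marg_pi2 ..
  have c1: "marg n Q True = c1" unfolding c1_def p11_def marg_pi2 p10 ..
  have c0p: "c0 > 0" using assms(4) c0 by simp
  have c1p: "c1 > 0" using assms(5) c1 by simp
  define q0 where "q0 = p01 / c0"
  define q1 where "q1 = p11 / c1"
  have cq0: "cond n Q True False = q0" unfolding cond_pi2 q0_def c0 p01_def ..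
  have cq1: "cond n Q True True = q1" unfolding cond_pi2 q1_def c1 p11_def ..
  have q0r: "0 \<le> q0" "q0 \<le> 1" unfolding q0_def using c0p p00n p01n c0_def by auto
  have q1r: "0 \<le> q1" "q1 \<le> 1" unfolding q1_def using c1p p11n p01n c1_def by auto
  have q10: "q1 > q0" using assms(6) cq0 cq1 by simp
  define Pl where "Pl = Pc n Q False"
  define Ph where "Ph = Pc n Q True"
  have Pl: "Pl = bernoulli_pmf q0" unfolding Pl_def Pc_def cq0 ..
  have Ph: "Ph = bernoulli_pmf q1" unfolding Ph_def Pc_def cq1 ..
  have PhPl: "Ph \<noteq> Pl"
  proof
    assume "Ph = Pl"
    then have "pmf Ph True = pmf Pl True" by simp
    then show False using Ph Pl q0r q1r q10 by simp
  qed
  define A where "A = PS True Ph"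
  define B where "B = PS False Ph"
  define C where "C = PS True Pl"
  define D where "D = PS False Pl"
  define Dl where "Dl = q0*(C-A)+(1-q0)*(D-B)"
  define Dh where "Dh = q1*(A-C)+(1-q1)*(B-D)"
  have ExPh: "Ex Ph f = q1 * f True + (1-q1) * f False" for f
    unfolding Ph using Ex_bern q1r by simp
  have ExPl: "Ex Pl f = q0 * f True + (1-q0) * f False" for f
    unfolding Pl using Ex_bern q0r by simp
  have "Ex Ph (\<lambda>s. PS s Ph) > Ex Ph (\<lambda>s. PS s Pl)"
    using assms(9) PhPl unfolding strictly_proper_def by blast
  then have Dh: "Dh > 0" unfolding ExPh Dh_def A_def B_def C_def D_def by (simp add: algebra_simps)
  have "Ex Pl (\<lambda>s. PS s Pl) > Ex Pl (\<lambda>s. PS s Ph)"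
    using assms(9) PhPl unfolding strictly_proper_def by metis
  then have Dl: "Dl > 0" unfolding ExPl Dl_def A_def B_def C_def D_def by (simp add: algebra_simps)
  have c0Dl: "c0 * Dl = p01*(C-A)+p00*(D-B)"
  proof -
    have e1: "c0*q0 = p01" unfolding q0_def using c0p by simp
    have e2: "c0*(1-q0) = p00" using e1 c0_def by (simp add: algebra_simps)
    have "c0*Dl = (c0*q0)*(C-A)+(c0*(1-q0))*(D-B)" unfolding Dl_def by (simp add: algebra_simps)
    then show ?thesis using e1 e2 by simp
  qed
  have c1Dh: "c1 * Dh = p11*(A-C)+p01*(B-D)"
  proof -
    have e1: "c1*q1 = p11" unfolding q1_def using c1p by simp
    have e2: "c1*(1-q1) = p01" using e1 c1_def by (simp add: algebra_simps)
    have "c1*Dh = (c1*q1)*(A-C)+(c1*(1-q1))*(B-D)" unfolding Dh_def by (simp add: algebra_simps)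
    then show ?thesis using e1 e2 by simp
  qed
  have de: "(A-B)+(D-C) > 0"
  proof -
    have "(q1 - q0) * ((A - C) - (B - D)) > 0" using Dh Dl unfolding Dh_def Dl_def
      by (simp add: algebra_simps)
    then have "(A - C) - (B - D) > 0" using q10 by (simp add: zero_less_mult_iff)
    then show ?thesis by simp
  qed
  have kEh: "kE_h n Q PS = (if A > B then \<lfloor>(real n - 1) * Dl / (A - B)\<rfloor> + 1 else int n)"
    unfolding kE_h_def Let_def Pl_def[symmetric] Ph_def[symmetric] A_def[symmetric] B_def[symmetric]
    by (simp add: ExPl Dl_def C_def D_def A_def B_def algebra_simps)
  have kEl: "kE_l n Q PS = (if D > C then \<lfloor>(real n - 1) * Dh / (D - C)\<rfloor> + 1 else int n)"
    unfolding kE_l_def Let_def Pl_def[symmetric] Ph_def[symmetric] C_def[symmetric] D_def[symmetric]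
    by (simp add: ExPh Dh_def C_def D_def A_def B_def algebra_simps)
  define Lf where "Lf \<sigma> = fst \<sigma> * (c0*Dl) + (1 - snd \<sigma>)*(c1*Dh)" for \<sigma> :: "real \<times> real"
  define Mf where "Mf \<tau> = c0*(A-B)*fst \<tau> + c1*(D-C)*(1-snd \<tau>)" for \<tau> :: "real \<times> real"
  define Rf where "Rf \<sigma> \<tau> = fst \<tau>*(p00*(1-fst \<sigma>)+p01*(1-snd \<sigma>)) + (1-snd \<tau>)*(p01*fst \<sigma>+p11 * snd \<sigma>)"
    for \<sigma> \<tau> :: "real \<times> real"
  have pvg: "pv n Q PS \<sigma> \<tau> - pv n Q PS truthful truthful = - Lf \<sigma> + Mf \<tau> - ((A-B)+(D-C)) * Rf \<sigma> \<tau>" for \<sigma> \<tau>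
    unfolding Lf_def Mf_def Rf_def c0Dl c1Dh
    by (subst pv_gain[OF p00_def[symmetric] p01_def[symmetric] p10 p11_def[symmetric]])
       (simp_all add: A_def B_def C_def D_def Ph_def Pl_def c0_def c1_def)
  have n1: "real n - 1 > 0" using n2 by simp
  have cardi: "card ({..<n} - {i}) = n - 1" if "i < n" for i using that by simp
  have gain: "(real n - 1) * (util n Q PS S i - util n Q PS (\<lambda>_. truthful) i)
      = (\<Sum>j\<in>{..<n}-{i}. - Lf (S i) + Mf (S j) - ((A-B)+(D-C)) * Rf (S i) (S j))" if "i<n" for S i
  proof -
    have "(real n - 1) * (util n Q PS S i - util n Q PS (\<lambda>_. truthful) i)
       = (\<Sum>j\<in>{..<n}-{i}. pv n Q PS (S i) (S j)) - (\<Sum>j\<in>{..<n}-{i}. pv n Q PS truthful truthful)"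
      unfolding util_eq[OF sym that n2] using n1 by (simp add: right_diff_distrib)
    also have "\<dots> = (\<Sum>j\<in>{..<n}-{i}. pv n Q PS (S i) (S j) - pv n Q PS truthful truthful)"
      by (simp add: sum_subtractf)
    finally show ?thesis by (simp add: pvg)
  qed
  have Mtr: "Mf truthful = 0" unfolding Mf_def truthful_def by simp
  have part1: "ex_ante_k_strong_eq n Q PS (kE n Q PS) (\<lambda>_. truthful)"
    unfolding ex_ante_k_strong_eq_def
  proof
    assume "\<exists>D \<Sigma>'. D \<subseteq> {..<n} \<and> int (card D) \<le> kE n Q PS \<and> is_profile n \<Sigma>' \<and>
            (\<forall>j\<in>{..<n} - D. \<Sigma>' j = (\<lambda>_. truthful) j) \<and>
            (\<forall>i\<in>D. util n Q PS \<Sigma>' i \<ge> util n Q PS (\<lambda>_. truthful) i) \<and>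
            (\<exists>i\<in>D. util n Q PS \<Sigma>' i > util n Q PS (\<lambda>_. truthful) i)"
    then obtain Dc S where DS: "Dc \<subseteq> {..<n}" "int (card Dc) \<le> kE n Q PS" "is_profile n S"
      "\<forall>j\<in>{..<n} - Dc. S j = truthful" "\<forall>i\<in>Dc. util n Q PS S i \<ge> util n Q PS (\<lambda>_. truthful) i"
      "\<exists>i\<in>Dc. util n Q PS S i > util n Q PS (\<lambda>_. truthful) i" by blast
    define k where "k = card Dc"
    have fin: "finite Dc" using DS(1) finite_subset by blast
    obtain i0 where i0: "i0 \<in> Dc" "util n Q PS S i0 > util n Q PS (\<lambda>_. truthful) i0" using DS(6) by blast
    have "card Dc > 0" using i0 fin card_gt_0_iff by blast
    then have k1: "real k \<ge> 1" using k_def by simp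
    have kle: "int k \<le> kE_h n Q PS" "int k \<le> kE_l n Q PS" using DS(2) k_def unfolding kE_def by auto
    have kh: "(real k - 1) * (A-B) \<le> (real n - 1) * Dl"
    proof (cases "A > B")
      case True
      then have "int k - 1 \<le> \<lfloor>(real n - 1) * Dl / (A - B)\<rfloor>" using kle(1) kEh by simp
      then have "real k - 1 \<le> (real n - 1) * Dl / (A - B)" by (simp add: le_floor_iff)
      then have "(real k - 1) * (A-B) \<le> (real n - 1) * Dl / (A - B) * (A-B)"
        using True by (intro mult_right_mono) auto
      then show ?thesis using True by simp
    next
      case False
      then have "(real k - 1) * (A-B) \<le> 0" using k1 by (intro mult_nonneg_nonpos) auto
      then show ?thesis using n1 Dl by (smt (verit) mult_pos_pos)
    qed
    have kl: "(real k - 1) * (D-C) \<le> (real n - 1) * Dh"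
    proof (cases "D > C")
      case True
      then have "int k - 1 \<le> \<lfloor>(real n - 1) * Dh / (D - C)\<rfloor>" using kle(2) kEl by simp
      then have "real k - 1 \<le> (real n - 1) * Dh / (D - C)" by (simp add: le_floor_iff)
      then have "(real k - 1) * (D-C) \<le> (real n - 1) * Dh / (D - C) * (D-C)"
        using True by (intro mult_right_mono) auto
      then show ?thesis using True by simp
    next
      case False
      then have "(real k - 1) * (D-C) \<le> 0" using k1 by (intro mult_nonneg_nonpos) auto
      then show ?thesis using n1 Dh by (smt (verit) mult_pos_pos)
    qed
    have strat: "0 \<le> fst (S j)" "fst (S j) \<le> 1" "0 \<le> snd (S j)" "snd (S j) \<le> 1" if "j<n" for j
      using DS(3) that unfolding is_profile_def is_strategy_def by auto
    have Rn: "Rf (S i) (S j) \<ge> 0" if "i<n" "j<n" for i j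
      unfolding Rf_def using strat[OF that(1)] strat[OF that(2)] p00n p01n p11n
      by (intro add_nonneg_nonneg mult_nonneg_nonneg) auto
    define SM where "SM = (\<Sum>j\<in>Dc. Mf (S j))"
    have SMn: "(\<Sum>j<n. Mf (S j)) = SM"
      unfolding SM_def using DS(1,4) Mtr by (intro sum.mono_neutral_right) auto
    have bound: "(real n - 1) * (util n Q PS S i - util n Q PS (\<lambda>_. truthful) i)
        \<le> - (real n - 1) * Lf (S i) + (SM - Mf (S i))" if "i \<in> Dc" for i
    proof -
      have iN: "i < n" using that DS(1) by auto
      have "(real n - 1) * (util n Q PS S i - util n Q PS (\<lambda>_. truthful) i)
          \<le> (\<Sum>j\<in>{..<n}-{i}. - Lf (S i) + Mf (S j))"
        unfolding gain[OF iN]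
        using Rn[OF iN] de by (intro sum_mono) (simp add: mult_nonneg_nonneg)
      also have "\<dots> = real (n - 1) * (- Lf (S i)) + (SM - Mf (S i))"
      proof -
        have "(\<Sum>j\<in>{..<n}-{i}. - Lf (S i) + Mf (S j)) = (\<Sum>j\<in>{..<n}-{i}. - Lf (S i)) + (\<Sum>j\<in>{..<n}-{i}. Mf (S j))"
          by (rule sum.distrib)
        also have "(\<Sum>j\<in>{..<n}-{i}. - Lf (S i)) = real (n - 1) * (- Lf (S i))"
          using cardi[OF iN] by simp
        also have "(\<Sum>j\<in>{..<n}-{i}. Mf (S j)) = SM - Mf (S i)"
          using iN SMn by (simp add: sum_diff1)
        finally show ?thesis .
      qed
      finally show ?thesis using n2 by (simp add: of_nat_diff algebra_simps)
    qed
    have per: "- (real n - 1) * Lf (S i) + (real k - 1) * Mf (S i) \<le> 0" if "i \<in> Dc" for i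
    proof -
      have iN: "i < n" using that DS(1) by auto
      define \<alpha> where "\<alpha> = fst (S i)"
      define \<gamma> where "\<gamma> = 1 - snd (S i)"
      have a0: "\<alpha> \<ge> 0" "\<gamma> \<ge> 0" using strat[OF iN] \<alpha>_def \<gamma>_def by auto
      have h1: "c0*\<alpha>*((real k - 1) * (A-B)) \<le> c0*\<alpha>*((real n - 1) * Dl)"
        using kh a0 c0p by (intro mult_left_mono) auto
      have h2: "c1*\<gamma>*((real k - 1) * (D-C)) \<le> c1*\<gamma>*((real n - 1) * Dh)"
        using kl a0 c1p by (intro mult_left_mono) auto
      have "- (real n - 1) * Lf (S i) + (real k - 1) * Mf (S i)
          = c0*\<alpha>*((real k - 1) * (A-B)) + c1*\<gamma>*((real k - 1) * (D-C)) - (c0*\<alpha>*((real n - 1) * Dl) + c1*\<gamma>*((real n - 1) * Dh))"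
        unfolding Lf_def Mf_def \<alpha>_def \<gamma>_def by (simp add: algebra_simps)
      then show ?thesis using h1 h2 by linarith
    qed
    have "(\<Sum>i\<in>Dc. (real n - 1) * (util n Q PS S i - util n Q PS (\<lambda>_. truthful) i))
        \<le> (\<Sum>i\<in>Dc. - (real n - 1) * Lf (S i) + (SM - Mf (S i)))"
      using bound by (rule sum_mono)
    also have "\<dots> = (\<Sum>i\<in>Dc. - (real n - 1) * Lf (S i) + (real k - 1) * Mf (S i))"
      unfolding SM_def k_def by (simp add: sum.distrib sum_subtractf algebra_simps sum_distrib_left)
    also have "\<dots> \<le> 0" using per by (intro sum_nonpos) auto
    finally have le0: "(\<Sum>i\<in>Dc. (real n - 1) * (util n Q PS S i - util n Q PS (\<lambda>_. truthful) i)) \<le> 0" .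
    have "(\<Sum>i\<in>Dc. (real n - 1) * (util n Q PS S i - util n Q PS (\<lambda>_. truthful) i)) > 0"
      using fin i0 DS(5) n1 by (intro sum_pos2[of Dc i0]) auto
    then show False using le0 by simp
  qed
  have gen: "\<not> ex_ante_k_strong_eq n Q PS k (\<lambda>_. truthful)"
    if s0: "is_strategy s0" "Rf s0 s0 = 0" "Rf s0 truthful = 0" and m: "1 \<le> m" "m \<le> n" "int m \<le> k"
      and pos: "- (real n - 1) * Lf s0 + (real m - 1) * Mf s0 > 0" for s0 m k
  proof -
    define S where "S j = (if j < m then s0 else truthful)" for j
    have g: "util n Q PS S i > util n Q PS (\<lambda>_. truthful) i" if "i \<in> {..<m}" for i
    proof -
      have iN: "i < n" "i < m" using that m by auto
      have "(real n - 1) * (util n Q PS S i - util n Q PS (\<lambda>_. truthful) i)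
          = (\<Sum>j\<in>{..<n}-{i}. - Lf s0 + Mf (S j))"
        unfolding gain[OF iN(1)] using iN s0 by (intro sum.cong) (auto simp: S_def)
      also have "\<dots> = (\<Sum>j\<in>{..<n}-{i}. - Lf s0) + (\<Sum>j\<in>{..<n}-{i}. Mf (S j))"
        by (rule sum.distrib)
      also have "(\<Sum>j\<in>{..<n}-{i}. - Lf s0) = real (n - 1) * (- Lf s0)"
        using cardi[OF iN(1)] by simp
      also have "(\<Sum>j\<in>{..<n}-{i}. Mf (S j)) = (\<Sum>j\<in>{..<m}-{i}. Mf (S j))"
        using m Mtr by (intro sum.mono_neutral_right) (auto simp: S_def)
      also have "\<dots> = (\<Sum>j\<in>{..<m}-{i}. Mf s0)"
        by (intro sum.cong) (auto simp: S_def)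
      also have "\<dots> = real (m - 1) * Mf s0" using iN by simp
      finally have "(real n - 1) * (util n Q PS S i - util n Q PS (\<lambda>_. truthful) i)
          = - (real n - 1) * Lf s0 + (real m - 1) * Mf s0"
        using m n2 by (simp add: of_nat_diff algebra_simps)
      then have "(real n - 1) * (util n Q PS S i - util n Q PS (\<lambda>_. truthful) i) > 0" using pos by simp
      then show ?thesis using n1 by (simp add: zero_less_mult_iff)
    qed
    have "is_profile n S" unfolding is_profile_def S_def using s0
      by (auto simp: is_strategy_def truthful_def)
    moreover have "{..<m} \<subseteq> {..<n}" using m by auto
    moreover have "int (card {..<m}) \<le> k" using m by simp
    moreover have "\<forall>j\<in>{..<n} - {..<m}. S j = (\<lambda>_. truthful) j" by (auto simp: S_def)
    moreover have "\<forall>i\<in>{..<m}. util n Q PS S i \<ge> util n Q PS (\<lambda>_. truthful) i" using g by (auto intro: less_imp_le)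
    moreover have "\<exists>i\<in>{..<m}. util n Q PS S i > util n Q PS (\<lambda>_. truthful) i" using g[of 0] m by auto
    ultimately show ?thesis unfolding ex_ante_k_strong_eq_def by blast
  qed
  have part2: "\<not> ex_ante_k_strong_eq n Q PS k (\<lambda>_. truthful)" if k: "kE n Q PS < k" "k \<le> int n" for k
  proof -
    have "kE n Q PS < int n" using k by simp
    then consider "kE n Q PS = kE_h n Q PS" "kE_h n Q PS < int n" | "kE n Q PS = kE_l n Q PS" "kE_l n Q PS < int n"
      unfolding kE_def by linarith
    then show ?thesis
    proof cases
      case 1
      then have AB: "A > B" using kEh by (auto split: if_splits)
      define x where "x = (real n - 1) * Dl / (A - B)"
      have x0: "x \<ge> 0" unfolding x_def using AB Dl n1 by simp
      have fx: "\<lfloor>x\<rfloor> \<ge> 0" using x0 by simp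
      define m where "m = nat (\<lfloor>x\<rfloor> + 2)"
      have mreal: "real m - 1 = real_of_int \<lfloor>x\<rfloor> + 1" unfolding m_def using fx by simp
      have im: "int m = \<lfloor>x\<rfloor> + 2" unfolding m_def using fx by simp
      have "kE n Q PS = \<lfloor>x\<rfloor> + 1" using 1 kEh AB x_def by simp
      then have km: "int m \<le> k" using im k by linarith
      have mn: "m \<le> n" using km k by simp
      have m1: "1 \<le> m" using im fx by linarith
      have "x < real m - 1" unfolding mreal by linarith
      then have "x * (A - B) < (real m - 1) * (A - B)" using AB by (intro mult_strict_right_mono) auto
      then have "(real n - 1) * Dl < (real m - 1) * (A - B)" unfolding x_def using AB by simp
      then have "c0 * ((real n - 1) * Dl) < c0 * ((real m - 1) * (A - B))" using c0p by simp
      then have pos: "- (real n - 1) * Lf (1,1) + (real m - 1) * Mf (1,1) > 0"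
        unfolding Lf_def Mf_def by (simp add: algebra_simps)
      show ?thesis
        by (rule gen[OF _ _ _ m1 mn km pos]) (auto simp: is_strategy_def Rf_def truthful_def)
    next
      case 2
      then have DC: "D > C" using kEl by (auto split: if_splits)
      define x where "x = (real n - 1) * Dh / (D - C)"
      have x0: "x \<ge> 0" unfolding x_def using DC Dh n1 by simp
      have fx: "\<lfloor>x\<rfloor> \<ge> 0" using x0 by simp
      define m where "m = nat (\<lfloor>x\<rfloor> + 2)"
      have mreal: "real m - 1 = real_of_int \<lfloor>x\<rfloor> + 1" unfolding m_def using fx by simp
      have im: "int m = \<lfloor>x\<rfloor> + 2" unfolding m_def using fx by simp
      have "kE n Q PS = \<lfloor>x\<rfloor> + 1" using 2 kEl DC x_def by simp
      then have km: "int m \<le> k" using im k by linarith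
      have mn: "m \<le> n" using km k by simp
      have m1: "1 \<le> m" using im fx by linarith
      have "x < real m - 1" unfolding mreal by linarith
      then have "x * (D - C) < (real m - 1) * (D - C)" using DC by (intro mult_strict_right_mono) auto
      then have "(real n - 1) * Dh < (real m - 1) * (D - C)" unfolding x_def using DC by simp
      then have "c1 * ((real n - 1) * Dh) < c1 * ((real m - 1) * (D - C))" using c1p by simp
      then have pos: "- (real n - 1) * Lf (0,0) + (real m - 1) * Mf (0,0) > 0"
        unfolding Lf_def Mf_def by (simp add: algebra_simps)
      show ?thesis
        by (rule gen[OF _ _ _ m1 mn km pos]) (auto simp: is_strategy_def Rf_def truthful_def)
    qed
  qed
  show ?thesis using part1 part2 by blast
qed


end
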